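(* Let $z=z(k,\varepsilon)$ and choose $\eta$ with $\Re(\overline z\eta)\ge0$. Then there is a constant $\rho>0$ independent of $k$ and $\varepsilon$ such that for all $k>0$ and all $v\in H^1(\Omega)$, $$\vert a_\varepsilon(v,v)\vert\ \ge\ \Im\big(\Theta\,a_\varepsilon(v,v)\big)\ \ge\ \rho\,\frac{\vert\varepsilon\vert}{k^2}\Vert v\Vert_{1,k}^2,\qquad\text{where }\Theta=-\overline z/\vert z\vert.$$
   Context: $\Omega\subset\mathbb R^d$ ($d=2,3$) a bounded Lipschitz domain with boundary $\Gamma$. $k>0$, $\varepsilon\in\mathbb R\setminus\{0\}$ with $\vert\varepsilon\vert\le C_0k^2$ for a fixed constant $C_0$, $\eta\in\mathbb C$. $z=\sqrt{k^2+{\rm i}\varepsilon}$ with the branch cut of the square root on the positive real axis (so $\Im z>0$). $a_\varepsilon(u,v)=\int_\Omega\nabla u\cdot\nabla\overline v-(k^2+{\rm i}\varepsilon)\int_\Omega u\overline v-{\rm i}\eta\int_\Gamma u\overline v$; $\Vert v\Vert_{1,k}^2=\Vert\nabla v\Vert_{L^2(\Omega)}^2+k^2\Vert v\Vert_{L^2(\Omega)}^2$. *)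

theory Defs
  imports "HOL-Analysis.Analysis"
begin

coinductive C_inf :: "('a::euclidean_space \<Rightarrow> real) \<Rightarrow> bool" where
  "(\<forall>x. f differentiable (at x)) \<Longrightarrow>
   (\<forall>b. C_inf (\<lambda>x. frechet_derivative f (at x) b)) \<Longrightarrow> C_inf f"

definition test_fun :: "'a::euclidean_space set \<Rightarrow> ('a \<Rightarrow> real) \<Rightarrow> bool" where
  "test_fun \<Omega> \<phi> \<longleftrightarrow> C_inf \<phi> \<and> compact (closure {x. \<phi> x \<noteq> 0})
      \<and> closure {x. \<phi> x \<noteq> 0} \<subseteq> \<Omega>"

definition L2 :: "'a::euclidean_space set \<Rightarrow> ('a \<Rightarrow> complex) \<Rightarrow> bool" where
  "L2 \<Omega> v \<longleftrightarrow> v \<in> borel_measurable (lebesgue_on \<Omega>)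
      \<and> integrable (lebesgue_on \<Omega>) (\<lambda>x. (cmod (v x))\<^sup>2)"

definition weak_partial ::
  "'a::euclidean_space set \<Rightarrow> ('a \<Rightarrow> complex) \<Rightarrow> 'a \<Rightarrow> ('a \<Rightarrow> complex) \<Rightarrow> bool" where
  "weak_partial \<Omega> v b g \<longleftrightarrow> (\<forall>\<phi>. test_fun \<Omega> \<phi> \<longrightarrow>
      integral\<^sup>L (lebesgue_on \<Omega>) (\<lambda>x. v x * of_real (frechet_derivative \<phi> (at x) b))
      = - integral\<^sup>L (lebesgue_on \<Omega>) (\<lambda>x. g x * of_real (\<phi> x)))"

definition H1 :: "'a::euclidean_space set \<Rightarrow> ('a \<Rightarrow> complex) \<Rightarrow> bool" where
  "H1 \<Omega> v \<longleftrightarrow> L2 \<Omega> v \<and> (\<forall>b\<in>Basis. \<exists>g. L2 \<Omega> g \<and> weak_partial \<Omega> v b g)"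

text \<open>A choice of the weak partial derivative (unique a.e.).\<close>
definition wgrad :: "'a::euclidean_space set \<Rightarrow> ('a \<Rightarrow> complex) \<Rightarrow> 'a \<Rightarrow> 'a \<Rightarrow> complex" where
  "wgrad \<Omega> v b = (SOME g. L2 \<Omega> g \<and> weak_partial \<Omega> v b g)"

definition L2_norm_sq :: "'a::euclidean_space set \<Rightarrow> ('a \<Rightarrow> complex) \<Rightarrow> real" where
  "L2_norm_sq \<Omega> v = integral\<^sup>L (lebesgue_on \<Omega>) (\<lambda>x. (cmod (v x))\<^sup>2)"

definition norm1k_sq :: "real \<Rightarrow> 'a::euclidean_space set \<Rightarrow> ('a \<Rightarrow> complex) \<Rightarrow> real" where
  "norm1k_sq k \<Omega> v = (\<Sum>b\<in>Basis. L2_norm_sq \<Omega> (wgrad \<Omega> v b)) + k\<^sup>2 * L2_norm_sq \<Omega> v"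

definition lipschitz_domain :: "'a::euclidean_space set \<Rightarrow> bool" where
  "lipschitz_domain \<Omega> \<longleftrightarrow> open \<Omega> \<and> connected \<Omega> \<and> \<Omega> \<noteq> {} \<and> bounded \<Omega> \<and>
     (\<forall>x0\<in>frontier \<Omega>. \<exists>r>0. \<exists>e. norm e = 1 \<and> (\<exists>h L. lipschitz_on L {y. y \<bullet> e = 0} h \<and>
        \<Omega> \<inter> ball x0 r = {x \<in> ball x0 r. x \<bullet> e < h (x - (x \<bullet> e) *\<^sub>R e)}))"

definition zk :: "real \<Rightarrow> real \<Rightarrow> complex" where
  "zk k \<epsilon> = (THE z. z\<^sup>2 = of_real (k\<^sup>2) + \<i> * of_real \<epsilon> \<and> Im z > 0)"

text \<open>The sesquilinear form a_eps; sigma is the surface measure on Gamma and tr the trace operator.\<close>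
definition a_eps ::
  "'a::euclidean_space set \<Rightarrow> 'a measure \<Rightarrow> (('a \<Rightarrow> complex) \<Rightarrow> 'a \<Rightarrow> complex)
   \<Rightarrow> real \<Rightarrow> real \<Rightarrow> complex \<Rightarrow> ('a \<Rightarrow> complex) \<Rightarrow> ('a \<Rightarrow> complex) \<Rightarrow> complex" where
  "a_eps \<Omega> \<sigma> tr k \<epsilon> \<eta> u v =
     (\<Sum>b\<in>Basis. integral\<^sup>L (lebesgue_on \<Omega>) (\<lambda>x. wgrad \<Omega> u b x * cnj (wgrad \<Omega> v b x)))
     - (of_real (k\<^sup>2) + \<i> * of_real \<epsilon>) * integral\<^sup>L (lebesgue_on \<Omega>) (\<lambda>x. u x * cnj (v x))
     - \<i> * \<eta> * integral\<^sup>L \<sigma> (\<lambda>x. tr u x * cnj (tr v x))"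

end

theory Submission
  imports Defs
begin

lemma int_cnj_self: "integral\<^sup>L M (\<lambda>x. f x * cnj (f x)) = of_real (integral\<^sup>L M (\<lambda>x. (cmod (f x))\<^sup>2))"
proof -
  have "(\<lambda>x. f x * cnj (f x)) = (\<lambda>x. complex_of_real ((cmod (f x))\<^sup>2))"
    by (intro ext) (metis complex_norm_square)
  then show ?thesis by (simp del: of_real_power)
qed

lemma zk_props:
  assumes "\<epsilon> \<noteq> 0"
  shows "(zk k \<epsilon>)\<^sup>2 = of_real (k\<^sup>2) + \<i> * of_real \<epsilon> \<and> Im (zk k \<epsilon>) > 0"
proof -
  define w where "w = of_real (k\<^sup>2) + \<i> * of_real \<epsilon>"
  define s0 where "s0 = csqrt w"
  have s0sq: "s0\<^sup>2 = w" unfolding s0_def by (rule power2_csqrt)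
  have "Im s0 \<noteq> 0"
  proof
    assume "Im s0 = 0"
    then have "Im (s0\<^sup>2) = 0" by (simp add: power2_eq_square)
    then show False using s0sq assms by (simp add: w_def)
  qed
  define s where "s = (if Im s0 > 0 then s0 else - s0)"
  have s1: "s\<^sup>2 = w" using s0sq by (simp add: s_def)
  have s2: "Im s > 0" using \<open>Im s0 \<noteq> 0\<close> by (simp add: s_def)
  have uniq: "z = s" if "z\<^sup>2 = w" "Im z > 0" for z
  proof -
    have "z\<^sup>2 = s\<^sup>2" using that s1 by simp
    then have "z = s \<or> z = - s" by (simp add: power2_eq_iff)
    moreover have "z \<noteq> - s" using that(2) s2 by auto
    ultimately show ?thesis by blast
  qed
  have "zk k \<epsilon> = s" unfolding zk_def w_def[symmetric]
    by (rule the_equality) (use s1 s2 uniq in blast)+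
  then show ?thesis using s1 s2 w_def by simp
qed
lemma real_part:
  fixes x y k \<epsilon> C0 G M B t r :: real
  assumes y0: "y > 0" and k: "k > 0" and eq1: "x\<^sup>2 - y\<^sup>2 = k\<^sup>2" and eq2: "2 * x * y = \<epsilon>"
    and eC: "\<bar>\<epsilon>\<bar> \<le> C0 * k\<^sup>2" and G0: "G \<ge> 0" and M0: "M \<ge> 0" and B0: "B \<ge> 0" and t0: "t \<ge> 0"
    and r_def: "r = sqrt (x\<^sup>2 + y\<^sup>2)"
  shows "1 / (2 * sqrt (1 + C0\<^sup>2)) * \<bar>\<epsilon>\<bar> / k\<^sup>2 * (G + k\<^sup>2 * M) \<le> (y * G + r\<^sup>2 * y * M + t * B) / r"
proof -
  have r0: "r > 0" using y0 by (simp add: r_def add_nonneg_pos)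
  have r2: "r\<^sup>2 = x\<^sup>2 + y\<^sup>2" by (simp add: r_def)
  have k2r: "k\<^sup>2 \<le> r\<^sup>2" using eq1 r2 y0 zero_le_power2[of y] by linarith
  have r4: "(r\<^sup>2)\<^sup>2 = (k\<^sup>2)\<^sup>2 + \<epsilon>\<^sup>2"
    unfolding r2 eq1[symmetric] eq2[symmetric] by algebra
  have C0p: "C0 * k\<^sup>2 \<ge> 0" using eC by linarith
  have "\<epsilon>\<^sup>2 \<le> (C0 * k\<^sup>2)\<^sup>2"
    using eC C0p by (metis abs_le_square_iff abs_of_nonneg)
  then have "(r\<^sup>2)\<^sup>2 \<le> ((sqrt (1 + C0\<^sup>2)) * k\<^sup>2)\<^sup>2"
    using r4 by (simp add: power_mult_distrib algebra_simps)
  then have rb: "r\<^sup>2 \<le> sqrt (1 + C0\<^sup>2) * k\<^sup>2"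
    by (rule power2_le_imp_le) simp
  have "x\<^sup>2 \<le> r\<^sup>2" using r2 by simp
  then have xr: "\<bar>x\<bar> \<le> r" using r0 by (metis abs_le_square_iff abs_of_pos)
  have ey: "\<bar>\<epsilon>\<bar> \<le> 2 * r * y"
  proof -
    have "\<bar>\<epsilon>\<bar> = 2 * \<bar>x\<bar> * y" using eq2 y0 by (auto simp add: abs_mult)
    also have "\<dots> \<le> 2 * r * y" using xr y0 by simp
    finally show ?thesis .
  qed
  define S where "S = sqrt (1 + C0\<^sup>2)"
  have S0: "S > 0" by (simp add: S_def add_pos_nonneg)
  have key: "1 / (2 * S) * \<bar>\<epsilon>\<bar> / k\<^sup>2 \<le> y / r"
  proof -
    have "1 / (2 * S) * \<bar>\<epsilon>\<bar> / k\<^sup>2 = \<bar>\<epsilon>\<bar> / (2 * (S * k\<^sup>2))" by (simp add: field_simps)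
    also have "\<dots> \<le> \<bar>\<epsilon>\<bar> / (2 * r\<^sup>2)"
      using rb r0 S0 k by (intro divide_left_mono) (auto simp: S_def)
    also have "\<dots> \<le> (2 * r * y) / (2 * r\<^sup>2)"
      using ey r0 by (intro divide_right_mono) auto
    also have "\<dots> = y / r" using r0 by (simp add: power2_eq_square)
    finally show ?thesis .
  qed
  have NN: "G + k\<^sup>2 * M \<ge> 0" using G0 M0 by simp
  have "1 / (2 * S) * \<bar>\<epsilon>\<bar> / k\<^sup>2 * (G + k\<^sup>2 * M) \<le> y / r * (G + k\<^sup>2 * M)"
    using key NN by (rule mult_right_mono)
  also have "\<dots> \<le> y / r * (G + r\<^sup>2 * M)"
    using k2r M0 y0 r0 by (intro mult_left_mono) (auto intro: mult_right_mono)
  also have "\<dots> = (y * G + r\<^sup>2 * y * M) / r"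
    by (simp add: field_simps)
  also have "\<dots> \<le> (y * G + r\<^sup>2 * y * M + t * B) / r"
    using t0 B0 r0 by (intro divide_right_mono) auto
  finally show ?thesis by (simp add: S_def)
qed
lemma ImA_lem:
  fixes x y p q r G M B :: real
  shows "Im ((- cnj (Complex x y) / of_real r) * (of_real G - (Complex x y)\<^sup>2 * of_real M - \<i> * Complex p q * of_real B))
     = (y * G + (x\<^sup>2 + y\<^sup>2) * y * M + (x * p + y * q) * B) / r"
proof -
  have "(- cnj (Complex x y) / of_real r) * (of_real G - (Complex x y)\<^sup>2 * of_real M - \<i> * Complex p q * of_real B)
    = ((- cnj (Complex x y)) * (of_real G - (Complex x y)\<^sup>2 * of_real M - \<i> * Complex p q * of_real B)) / of_real r"
    by simp
  also have "Im \<dots> = Im ((- cnj (Complex x y)) * (of_real G - (Complex x y)\<^sup>2 * of_real M - \<i> * Complex p q * of_real B)) / r"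
    by (rule Im_divide_of_real)
  also have "Im ((- cnj (Complex x y)) * (of_real G - (Complex x y)\<^sup>2 * of_real M - \<i> * Complex p q * of_real B))
     = y * G + (x\<^sup>2 + y\<^sup>2) * y * M + (x * p + y * q) * B"
    by (simp add: power2_eq_square algebra_simps)
  finally show ?thesis .
qed
theorem lemma2p4:
  fixes \<Omega> :: "'a::euclidean_space set" and C0 :: real
    and \<sigma> :: "'a measure" and tr :: "('a \<Rightarrow> complex) \<Rightarrow> 'a \<Rightarrow> complex"
  assumes dim: "DIM('a) = 2 \<or> DIM('a) = 3"
    and dom: "lipschitz_domain \<Omega>"
    and sigma_space: "space \<sigma> = frontier \<Omega>"
    and tr_L2: "\<forall>v. H1 \<Omega> v \<longrightarrow> tr v \<in> borel_measurable \<sigma>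
                        \<and> integrable \<sigma> (\<lambda>x. (cmod (tr v x))\<^sup>2)"
    and tr_restr: "\<forall>v. H1 \<Omega> v \<longrightarrow> continuous_on (closure \<Omega>) v \<longrightarrow>
                        (\<forall>x\<in>frontier \<Omega>. tr v x = v x)"
  shows "\<exists>\<rho>>0. \<forall>k \<epsilon> \<eta> v. k > 0 \<longrightarrow> \<epsilon> \<noteq> 0 \<longrightarrow> \<bar>\<epsilon>\<bar> \<le> C0 * k\<^sup>2 \<longrightarrow>
            Re (cnj (zk k \<epsilon>) * \<eta>) \<ge> 0 \<longrightarrow> H1 \<Omega> v \<longrightarrow>
            cmod (a_eps \<Omega> \<sigma> tr k \<epsilon> \<eta> v v)
              \<ge> Im ((- cnj (zk k \<epsilon>) / of_real (cmod (zk k \<epsilon>))) * a_eps \<Omega> \<sigma> tr k \<epsilon> \<eta> v v)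
            \<and> Im ((- cnj (zk k \<epsilon>) / of_real (cmod (zk k \<epsilon>))) * a_eps \<Omega> \<sigma> tr k \<epsilon> \<eta> v v)
              \<ge> \<rho> * \<bar>\<epsilon>\<bar> / k\<^sup>2 * norm1k_sq k \<Omega> v"
proof (intro exI[of _ "1 / (2 * sqrt (1 + C0\<^sup>2))"] conjI allI impI)
  show "1 / (2 * sqrt (1 + C0\<^sup>2)) > 0" by (simp add: add_pos_nonneg)
  fix k \<epsilon> :: real and \<eta> :: complex and v
  assume k: "k > 0" and e: "\<epsilon> \<noteq> 0" and eC: "\<bar>\<epsilon>\<bar> \<le> C0 * k\<^sup>2"
    and eta: "Re (cnj (zk k \<epsilon>) * \<eta>) \<ge> 0" and H: "H1 \<Omega> v"
  define z where "z = zk k \<epsilon>"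
  have zp: "z\<^sup>2 = of_real (k\<^sup>2) + \<i> * of_real \<epsilon>" "Im z > 0"
    using zk_props[OF e] by (auto simp: z_def)
  define x where "x = Re z"
  define y where "y = Im z"
  define p where "p = Re \<eta>"
  define q where "q = Im \<eta>"
  have zc: "z = Complex x y" by (simp add: x_def y_def)
  have ec: "\<eta> = Complex p q" by (simp add: p_def q_def)
  have y0: "y > 0" using zp by (simp add: y_def)
  have eq1: "x\<^sup>2 - y\<^sup>2 = k\<^sup>2" and eq2: "2 * x * y = \<epsilon>"
    using zp(1) unfolding zc by (simp_all add: power2_eq_square complex_eq_iff algebra_simps)
  have etap: "x * p + y * q \<ge> 0" using eta unfolding x_def y_def p_def q_def z_def by simp
  define G where "G = (\<Sum>b\<in>Basis. L2_norm_sq \<Omega> (wgrad \<Omega> v b))"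
  define M where "M = L2_norm_sq \<Omega> v"
  define B where "B = integral\<^sup>L \<sigma> (\<lambda>x. (cmod (tr v x))\<^sup>2)"
  have G0: "G \<ge> 0" unfolding G_def L2_norm_sq_def
    by (intro sum_nonneg integral_nonneg_AE) auto
  have M0: "M \<ge> 0" unfolding M_def L2_norm_sq_def
    by (intro integral_nonneg_AE) auto
  have B0: "B \<ge> 0" unfolding B_def by (intro integral_nonneg_AE) auto
  have N: "norm1k_sq k \<Omega> v = G + k\<^sup>2 * M" by (simp add: norm1k_sq_def G_def M_def)
  define A where "A = a_eps \<Omega> \<sigma> tr k \<epsilon> \<eta> v v"
  have A: "A = of_real G - z\<^sup>2 * of_real M - \<i> * \<eta> * of_real B"
    unfolding A_def a_eps_def zp(1) int_cnj_self G_def M_def B_def L2_norm_sq_def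
    by simp
  define r where "r = sqrt (x\<^sup>2 + y\<^sup>2)"
  have cz: "cmod z = r" by (simp add: zc r_def cmod_def)
  have r0: "r > 0" using y0 by (simp add: r_def add_nonneg_pos)
  have r2: "r\<^sup>2 = x\<^sup>2 + y\<^sup>2" by (simp add: r_def)
  have ImA: "Im ((- cnj z / of_real (cmod z)) * A) = (y * G + r\<^sup>2 * y * M + (x * p + y * q) * B) / r"
    unfolding A cz r2 unfolding zc ec by (rule ImA_lem)
  have cm: "cmod ((- cnj z / of_real (cmod z)) * A) = cmod A"
    using r0 cz by (simp add: norm_mult norm_divide)
  have "Im ((- cnj z / of_real (cmod z)) * A) \<le> cmod ((- cnj z / of_real (cmod z)) * A)"
    using abs_Im_le_cmod[of "(- cnj z / of_real (cmod z)) * A"] by linarith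
  then show "cmod (a_eps \<Omega> \<sigma> tr k \<epsilon> \<eta> v v)
              \<ge> Im ((- cnj (zk k \<epsilon>) / of_real (cmod (zk k \<epsilon>))) * a_eps \<Omega> \<sigma> tr k \<epsilon> \<eta> v v)"
    unfolding cm unfolding z_def A_def .
  have "1 / (2 * sqrt (1 + C0\<^sup>2)) * \<bar>\<epsilon>\<bar> / k\<^sup>2 * (G + k\<^sup>2 * M) \<le> (y * G + r\<^sup>2 * y * M + (x * p + y * q) * B) / r"
    by (rule real_part[OF y0 k eq1 eq2 eC G0 M0 B0 etap r_def])
  then show "Im ((- cnj (zk k \<epsilon>) / of_real (cmod (zk k \<epsilon>))) * a_eps \<Omega> \<sigma> tr k \<epsilon> \<eta> v v)
              \<ge> 1 / (2 * sqrt (1 + C0\<^sup>2)) * \<bar>\<epsilon>\<bar> / k\<^sup>2 * norm1k_sq k \<Omega> v"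
    unfolding N ImA[symmetric] unfolding z_def A_def .
qed

end
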